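(* Let $(\mathcal{M},\mathrm{dist})$ be a metric space, $\mathcal{F}\subset2^{\mathcal{M}}$, and $J_\beta:\mathcal{M}\to\mathbb{R}\cup\{+\infty\}$, $0<\beta<+\infty$, lower semi-continuous functionals with $J_{\beta_1}\le J_{\beta_2}$ on $\mathcal{M}$ whenever $0<\beta_1\le\beta_2<+\infty$. Let $J_\infty=\sup_{\beta>0}J_\beta$ and $c_\beta=\inf_{A\in\mathcal{F}}\sup_AJ_\beta$ for $0<\beta\le+\infty$, and assume $c_\beta\in\mathbb{R}$ for all $0<\beta\le+\infty$. Assume (F2'): for every sequence $(A_n)\subset\mathcal{F}$ such that, for some $\beta$, $A_n\subset\mathcal{M}^{c_\infty+1}_\beta$ for all $n$, one has $\limsup_nA_n\in\mathcal{F}$. Then (1) for every $0<\beta<+\infty$ there is an optimal set for $J_\beta$ at $c_\beta$; (2) $c_\beta\to c_\infty$ as $\beta\to+\infty$; (3) if $\beta_n\to+\infty$ and $A_n\in\mathcal{F}$ is optimal for $J_{\beta_n}$ at $c_{\beta_n}$, then $\limsup_nA_n$ is optimal for $J_\infty$ at $c_\infty$.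
   Context: $\mathcal{M}^{c'}_\beta=\{x\in\mathcal{M}:J_\beta(x)\le c'\}$. A set $A$ is optimal for $J$ at $c$ if $A\in\mathcal{F}$ and $\sup_AJ=c$. For sets $A_n\subset\mathcal{M}$, $\limsup_nA_n$ is the set of $x$ such that for some $n_j\to\infty$ there are $x_{n_j}\in A_{n_j}$ with $x_{n_j}\to x$. *)

theory Defs
  imports "HOL-Analysis.Analysis" "HOL-Library.Extended_Real"
begin

text \<open>Lower semicontinuity of an extended-real valued functional on a metric space
  (sequential form, equivalent to the usual one in metric spaces).\<close>
definition lsc :: "('a::metric_space \<Rightarrow> ereal) \<Rightarrow> bool" where
  "lsc J \<longleftrightarrow> (\<forall>x xs. xs \<longlonglongrightarrow> x \<longrightarrow> J x \<le> liminf (\<lambda>n. J (xs n)))"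

text \<open>Kuratowski upper limit of a sequence of sets.\<close>
definition seq_limsup :: "(nat \<Rightarrow> 'a::metric_space set) \<Rightarrow> 'a set" where
  "seq_limsup A = {x. \<exists>nj xs. filterlim nj sequentially sequentially \<and>
       (\<forall>j. xs j \<in> A (nj j)) \<and> xs \<longlonglongrightarrow> x}"

definition minimax :: "'a set set \<Rightarrow> ('a \<Rightarrow> ereal) \<Rightarrow> ereal" where
  "minimax F J = (INF A\<in>F. SUP x\<in>A. J x)"

definition optimal :: "'a set set \<Rightarrow> ('a \<Rightarrow> ereal) \<Rightarrow> ereal \<Rightarrow> 'a set \<Rightarrow> bool" where
  "optimal F J c A \<longleftrightarrow> A \<in> F \<and> (SUP x\<in>A. J x) = c"

definition sublevel :: "('a \<Rightarrow> ereal) \<Rightarrow> ereal \<Rightarrow> 'a set" where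
  "sublevel J c = {x. J x \<le> c}"

end

theory Submission
  imports Defs
begin

lemma core:
  fixes g :: "'a::metric_space \<Rightarrow> ereal" and e :: "nat \<Rightarrow> ereal"
  assumes "lsc g" "xs \<longlonglongrightarrow> x" "eventually (\<lambda>j. g (xs j) \<le> e j) sequentially" "e \<longlonglongrightarrow> L"
  shows "g x \<le> L"
proof -
  have "g x \<le> liminf (\<lambda>n. g (xs n))" using assms(1,2) unfolding lsc_def by blast
  also have "\<dots> \<le> liminf e" by (rule Liminf_mono) (use assms(3) in auto)
  also have "liminf e = L" using lim_imp_Liminf[OF _ assms(4)] by simp
  finally show ?thesis .
qed

theorem theorem2p7:
  fixes F :: "'a::metric_space set set"
    and J :: "real \<Rightarrow> 'a \<Rightarrow> ereal"
    and Jinf :: "'a \<Rightarrow> ereal"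
  assumes no_minf: "\<And>\<beta> x. \<beta> > 0 \<Longrightarrow> J \<beta> x \<noteq> -\<infinity>"
    and lsc: "\<And>\<beta>. \<beta> > 0 \<Longrightarrow> lsc (J \<beta>)"
    and mono: "\<And>\<beta>1 \<beta>2 x. 0 < \<beta>1 \<Longrightarrow> \<beta>1 \<le> \<beta>2 \<Longrightarrow> J \<beta>1 x \<le> J \<beta>2 x"
    and Jinf_def: "Jinf = (\<lambda>x. SUP \<beta>\<in>{0<..}. J \<beta> x)"
    and c_fin: "\<And>\<beta>. \<beta> > 0 \<Longrightarrow> \<bar>minimax F (J \<beta>)\<bar> \<noteq> \<infinity>"
    and cinf_fin: "\<bar>minimax F Jinf\<bar> \<noteq> \<infinity>"
    and F2': "\<And>A \<beta>. (\<forall>n. A n \<in> F) \<Longrightarrow> \<beta> > 0 \<Longrightarrow>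
               (\<forall>n. A n \<subseteq> sublevel (J \<beta>) (minimax F Jinf + 1)) \<Longrightarrow> seq_limsup A \<in> F"
  shows "(\<forall>\<beta>>0. \<exists>A. optimal F (J \<beta>) (minimax F (J \<beta>)) A)
     \<and> ((\<lambda>\<beta>. minimax F (J \<beta>)) \<longlongrightarrow> minimax F Jinf) at_top
     \<and> (\<forall>\<beta>s A. filterlim \<beta>s at_top sequentially \<longrightarrow> (\<forall>n. \<beta>s n > 0) \<longrightarrow>
          (\<forall>n. optimal F (J (\<beta>s n)) (minimax F (J (\<beta>s n))) (A n)) \<longrightarrow>
          optimal F Jinf (minimax F Jinf) (seq_limsup A))"
proof -
  define c where "c = (\<lambda>\<beta>. minimax F (J \<beta>))"
  define ci where "ci = minimax F Jinf"
  have J_le: "J \<beta> x \<le> Jinf x" if "\<beta> > 0" for \<beta> x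
    unfolding Jinf_def using that by (auto intro: SUP_upper)
  have c_le: "c \<beta> \<le> ci" if "\<beta> > 0" for \<beta>
    unfolding c_def ci_def minimax_def
    by (rule INF_mono) (use J_le that in \<open>auto intro!: SUP_mono\<close>)
  have c_mono: "c \<beta>1 \<le> c \<beta>2" if "0 < \<beta>1" "\<beta>1 \<le> \<beta>2" for \<beta>1 \<beta>2
    unfolding c_def minimax_def
    by (rule INF_mono) (use mono[OF that] in \<open>auto intro!: SUP_mono\<close>)
  have c_leA: "c \<beta> \<le> (SUP x\<in>A. J \<beta> x)" if "A \<in> F" for A \<beta>
    unfolding c_def minimax_def using that by (rule INF_lower)
  have ci_leA: "ci \<le> (SUP x\<in>A. Jinf x)" if "A \<in> F" for A
    unfolding ci_def minimax_def using that by (rule INF_lower)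
  have ci1: "ci \<le> ci + 1" using cinf_fin unfolding ci_def by (cases "minimax F Jinf") auto
  have P1: "\<exists>A. optimal F (J \<beta>) (c \<beta>) A" if bpos: "\<beta> > 0" for \<beta>
  proof -
    obtain r where r: "c \<beta> = ereal r" using c_fin[OF bpos] unfolding c_def by (cases "minimax F (J \<beta>)") auto
    have "\<exists>A\<in>F. (SUP x\<in>A. J \<beta> x) < ereal (r + 1 / (real n + 1))" for n :: nat
    proof -
      have "c \<beta> < ereal (r + 1 / (real n + 1))" using r by simp
      thus ?thesis unfolding c_def minimax_def by (simp add: INF_less_iff)
    qed
    then obtain A where AF: "\<And>n. A n \<in> F" and As: "\<And>n. (SUP x\<in>A n. J \<beta> x) < ereal (r + 1 / (real n + 1))"
      by metis
    have sub: "A n \<subseteq> sublevel (J \<beta>) (ci + 1)" for n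
    proof
      fix x assume x: "x \<in> A n"
      have "J \<beta> x \<le> (SUP x\<in>A n. J \<beta> x)" using x by (rule SUP_upper)
      also have "\<dots> \<le> ereal (r + 1 / (real n + 1))" using As[of n] by simp
      also have "\<dots> = c \<beta> + ereal (1 / (real n + 1))" using r by simp
      also have "\<dots> \<le> ci + 1"
        by (rule add_mono) (use c_le[OF bpos] in \<open>auto simp: divide_le_eq\<close>)
      finally show "x \<in> sublevel (J \<beta>) (ci + 1)" unfolding sublevel_def by simp
    qed
    have LF: "seq_limsup A \<in> F" using F2'[of A \<beta>] AF bpos sub unfolding ci_def by auto
    have "(SUP x\<in>seq_limsup A. J \<beta> x) \<le> c \<beta>"
    proof (rule SUP_least)
      fix x assume "x \<in> seq_limsup A"
      then obtain nj xs where nj: "filterlim nj sequentially sequentially" and xsA: "\<forall>j. xs j \<in> A (nj j)"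
        and xsl: "xs \<longlonglongrightarrow> x" unfolding seq_limsup_def by blast
      have e: "(\<lambda>j. ereal (r + 1 / (real (nj j) + 1))) \<longlonglongrightarrow> ereal r"
      proof -
        have "(\<lambda>n. 1 / (real n + 1)) \<longlonglongrightarrow> 0" using LIMSEQ_inverse_real_of_nat by (simp add: inverse_eq_divide add.commute)
        hence "(\<lambda>j. 1 / (real (nj j) + 1)) \<longlonglongrightarrow> 0" using nj by (rule filterlim_compose)
        hence "(\<lambda>j. r + 1 / (real (nj j) + 1)) \<longlonglongrightarrow> r + 0" by (intro tendsto_add) auto
        thus ?thesis by (simp add: tendsto_ereal)
      qed
      have "J \<beta> x \<le> ereal r"
      proof (rule core[OF lsc[OF bpos] xsl _ e])
        show "\<forall>\<^sub>F j in sequentially. J \<beta> (xs j) \<le> ereal (r + 1 / (real (nj j) + 1))"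
        proof (intro always_eventually allI)
          fix j
          have "J \<beta> (xs j) \<le> (SUP x\<in>A (nj j). J \<beta> x)" using xsA by (auto intro: SUP_upper)
          also have "\<dots> \<le> ereal (r + 1 / (real (nj j) + 1))" using As[of "nj j"] by simp
          finally show "J \<beta> (xs j) \<le> ereal (r + 1 / (real (nj j) + 1))" .
        qed
      qed
      thus "J \<beta> x \<le> c \<beta>" using r by simp
    qed
    moreover have "c \<beta> \<le> (SUP x\<in>seq_limsup A. J \<beta> x)" using c_leA[OF LF] .
    ultimately show ?thesis unfolding optimal_def using LF by (intro exI[of _ "seq_limsup A"]) auto
  qed
  have key: "seq_limsup A \<in> F \<and> (\<forall>x\<in>seq_limsup A. Jinf x \<le> L)"
    if bs: "filterlim \<beta>s at_top sequentially" and bpos: "\<forall>n. \<beta>s n > 0"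
      and opt: "\<forall>n. optimal F (J (\<beta>s n)) (c (\<beta>s n)) (A n)" and cL: "\<forall>n. c (\<beta>s n) \<le> L"
    for \<beta>s A L
  proof -
    obtain N where N: "\<And>n. n \<ge> N \<Longrightarrow> \<beta>s n \<ge> 1"
      using bs unfolding filterlim_at_top eventually_sequentially by blast
    define b0 where "b0 = Min (insert 1 (\<beta>s ` {..<N}))"
    have b0pos: "b0 > 0" unfolding b0_def using bpos by (subst Min_gr_iff) auto
    have b0le: "b0 \<le> \<beta>s n" for n
    proof (cases "n < N")
      case True thus ?thesis unfolding b0_def by (intro Min_le) auto
    next
      case False
      have "b0 \<le> 1" unfolding b0_def by (intro Min_le) auto
      thus ?thesis using N[of n] False by simp
    qed
    have AF: "A n \<in> F" for n using opt unfolding optimal_def by auto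
    have Asup: "(SUP x\<in>A n. J (\<beta>s n) x) = c (\<beta>s n)" for n using opt unfolding optimal_def by auto
    have sub: "A n \<subseteq> sublevel (J b0) (ci + 1)" for n
    proof
      fix x assume x: "x \<in> A n"
      have "J b0 x \<le> J (\<beta>s n) x" using mono b0pos b0le by blast
      also have "\<dots> \<le> (SUP x\<in>A n. J (\<beta>s n) x)" using x by (rule SUP_upper)
      also have "\<dots> \<le> ci" using Asup c_le bpos by simp
      also have "\<dots> \<le> ci + 1" by (rule ci1)
      finally show "x \<in> sublevel (J b0) (ci + 1)" unfolding sublevel_def by simp
    qed
    have LF: "seq_limsup A \<in> F" using F2'[of A b0] AF b0pos sub unfolding ci_def by auto
    have "Jinf x \<le> L" if xin: "x \<in> seq_limsup A" for x
    proof -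
      obtain nj xs where nj: "filterlim nj sequentially sequentially" and xsA: "\<forall>j. xs j \<in> A (nj j)"
        and xsl: "xs \<longlonglongrightarrow> x" using xin unfolding seq_limsup_def by blast
      have bnj: "filterlim (\<lambda>j. \<beta>s (nj j)) at_top sequentially"
        using filterlim_compose[OF bs nj] by (simp add: o_def)
      show ?thesis unfolding Jinf_def
      proof (rule SUP_least)
        fix \<beta> :: real assume "\<beta> \<in> {0<..}"
        hence \<beta>pos: "\<beta> > 0" by simp
        show "J \<beta> x \<le> L"
        proof (rule core[OF lsc[OF \<beta>pos] xsl _ tendsto_const])
          have "eventually (\<lambda>j. \<beta>s (nj j) \<ge> \<beta>) sequentially"
            using bnj unfolding filterlim_at_top by blast
          thus "\<forall>\<^sub>F j in sequentially. J \<beta> (xs j) \<le> L"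
          proof (rule eventually_mono)
            fix j assume "\<beta>s (nj j) \<ge> \<beta>"
            hence "J \<beta> (xs j) \<le> J (\<beta>s (nj j)) (xs j)" using mono \<beta>pos by blast
            also have "\<dots> \<le> (SUP x\<in>A (nj j). J (\<beta>s (nj j)) x)" using xsA by (auto intro: SUP_upper)
            also have "\<dots> \<le> L" using Asup cL by simp
            finally show "J \<beta> (xs j) \<le> L" .
          qed
        qed
      qed
    qed
    with LF show ?thesis by blast
  qed
  have P3: "optimal F Jinf ci (seq_limsup A)"
    if bs: "filterlim \<beta>s at_top sequentially" and bpos: "\<forall>n. \<beta>s n > 0"
      and opt: "\<forall>n. optimal F (J (\<beta>s n)) (c (\<beta>s n)) (A n)" for \<beta>s A
  proof -
    have "seq_limsup A \<in> F \<and> (\<forall>x\<in>seq_limsup A. Jinf x \<le> ci)"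
      by (rule key[OF bs bpos opt]) (use c_le bpos in auto)
    moreover from this have "ci \<le> (SUP x\<in>seq_limsup A. Jinf x)" using ci_leA by blast
    ultimately show ?thesis unfolding optimal_def by (auto intro: antisym SUP_least)
  qed
  have P2: "(c \<longlongrightarrow> ci) at_top"
  proof -
    define L where "L = (SUP \<beta>\<in>{0<..}. c \<beta>)"
    define \<beta>s where "\<beta>s = (\<lambda>n::nat. real n + 1)"
    have bs: "filterlim \<beta>s at_top sequentially" unfolding \<beta>s_def
      unfolding filterlim_at_top eventually_sequentially
    proof
      fix Z :: real
      show "\<exists>N. \<forall>n\<ge>N. Z \<le> real n + 1"
      proof (intro exI[of _ "nat \<lceil>Z\<rceil>"] allI impI)
        fix n :: nat assume n: "nat \<lceil>Z\<rceil> \<le> n"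
        have "Z \<le> real (nat \<lceil>Z\<rceil>)" by (rule real_nat_ceiling_ge)
        also have "\<dots> \<le> real n" using n by (rule of_nat_mono)
        finally show "Z \<le> real n + 1" by simp
      qed
    qed
    have bpos: "\<forall>n. \<beta>s n > 0" unfolding \<beta>s_def by auto
    have "\<forall>n. \<exists>A. optimal F (J (\<beta>s n)) (c (\<beta>s n)) A" using P1 bpos by blast
    then obtain A where opt: "\<forall>n. optimal F (J (\<beta>s n)) (c (\<beta>s n)) (A n)" by metis
    have cL: "\<forall>n. c (\<beta>s n) \<le> L" unfolding L_def using bpos by (auto intro: SUP_upper)
    have K: "seq_limsup A \<in> F \<and> (\<forall>x\<in>seq_limsup A. Jinf x \<le> L)" by (rule key[OF bs bpos opt cL])
    have ciL: "ci \<le> L"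
    proof -
      have "ci \<le> (SUP x\<in>seq_limsup A. Jinf x)" using ci_leA K by blast
      also have "\<dots> \<le> L" using K by (auto intro: SUP_least)
      finally show ?thesis .
    qed
    show ?thesis
    proof (rule order_tendstoI)
      fix a assume "a < ci"
      hence "a < L" using ciL by simp
      then obtain \<beta>0 where b0: "\<beta>0 > 0" "a < c \<beta>0" unfolding L_def by (auto simp: less_SUP_iff)
      show "\<forall>\<^sub>F \<beta> in at_top. a < c \<beta>"
        unfolding eventually_at_top_linorder
      proof (intro exI[of _ \<beta>0] allI impI)
        fix \<beta> assume "\<beta> \<ge> \<beta>0"
        hence "c \<beta>0 \<le> c \<beta>" using c_mono b0(1) by blast
        thus "a < c \<beta>" using b0(2) by (rule less_le_trans[rotated])
      qed
    next
      fix a assume "ci < a"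
      show "\<forall>\<^sub>F \<beta> in at_top. c \<beta> < a"
        unfolding eventually_at_top_linorder
      proof (intro exI[of _ 1] allI impI)
        fix \<beta> :: real assume "\<beta> \<ge> 1"
        hence "c \<beta> \<le> ci" using c_le by simp
        thus "c \<beta> < a" using \<open>ci < a\<close> by (rule le_less_trans)
      qed
    qed
  qed
  have P1': "\<forall>\<beta>>0. \<exists>A. optimal F (J \<beta>) (minimax F (J \<beta>)) A" using P1 unfolding c_def by blast
  have P2': "((\<lambda>\<beta>. minimax F (J \<beta>)) \<longlongrightarrow> minimax F Jinf) at_top" using P2 unfolding c_def ci_def .
  have P3': "\<forall>\<beta>s A. filterlim \<beta>s at_top sequentially \<longrightarrow> (\<forall>n. \<beta>s n > 0) \<longrightarrow>
          (\<forall>n. optimal F (J (\<beta>s n)) (minimax F (J (\<beta>s n))) (A n)) \<longrightarrow>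
          optimal F Jinf (minimax F Jinf) (seq_limsup A)"
    using P3 unfolding c_def ci_def by blast
  show ?thesis using P1' P2' P3' by (intro conjI)
qed

end
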